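(* Let $G$ be a group with normal subgroups $H_1$ and $H_2$ such that $H_1$ has order $2$, $G/H_1$ has exponent $2$, and $G/H_2\cong\mathbb{Z}/4\mathbb{Z}$. Then $G$ is abelian. *)

theory Defs
  imports "HOL-Algebra.Algebra"
begin

definition has_exponent :: "('a, 'b) monoid_scheme \<Rightarrow> nat \<Rightarrow> bool" where
  "has_exponent G n \<longleftrightarrow> 0 < n \<and> (\<forall>x\<in>carrier G. x [^]\<^bsub>G\<^esub> n = \<one>\<^bsub>G\<^esub>) \<and>
     (\<forall>m. 0 < m \<and> (\<forall>x\<in>carrier G. x [^]\<^bsub>G\<^esub> m = \<one>\<^bsub>G\<^esub>) \<longrightarrow> n \<le> m)"

end

theory Submission
  imports Defs
begin

lemma (in normal) coset_eq_imp:
  assumes "x \<in> carrier G" "y \<in> carrier G" "H #> x = H #> y"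
  shows "x \<otimes> inv y \<in> H"
proof -
  have "H #> (x \<otimes> inv y) = (H #> x) <#> (H #> inv y)"
    using assms(1,2) by (simp add: rcos_sum)
  also have "\<dots> = (H #> y) <#> (H #> inv y)" using assms by simp
  also have "\<dots> = H #> (y \<otimes> inv y)" using assms by (simp add: rcos_sum)
  also have "\<dots> = H" using assms
    by (simp add: subgroup.rcos_const[OF subgroup_axioms] is_group)
  finally show ?thesis
    using assms coset_join1 subgroup_axioms by blast
qed

lemma (in group) exp2_comm:
  assumes "\<And>x. x \<in> carrier G \<Longrightarrow> x \<otimes> x = \<one>"
    and "x \<in> carrier G" "y \<in> carrier G"
  shows "x \<otimes> y = y \<otimes> x"
proof -
  have i: "\<And>z. z \<in> carrier G \<Longrightarrow> inv z = z"
    using assms(1) inv_equality by blast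
  have "x \<otimes> y = inv (x \<otimes> y)" using assms by (simp add: i)
  also have "\<dots> = inv y \<otimes> inv x" using assms by (simp add: inv_mult_group)
  also have "\<dots> = y \<otimes> x" using assms by (simp add: i)
  finally show ?thesis .
qed

theorem lemma4p1:
  fixes G (structure)
  assumes "group G"
    and "H1 \<lhd> G" and "H2 \<lhd> G"
    and "finite H1" and "card H1 = 2"
    and "has_exponent (G Mod H1) 2"
    and "G Mod H2 \<cong> integer_mod_group 4"
  shows "comm_group G"
proof -
  interpret G: group G by fact
  interpret N1: normal H1 G by fact
  interpret N2: normal H2 G by fact
  interpret Q1: group "G Mod H1" by (rule N1.factorgroup_is_group)
  interpret Q2: group "G Mod H2" by (rule N2.factorgroup_is_group)
  have exp: "\<And>Z. Z \<in> carrier (G Mod H1) \<Longrightarrow> Z \<otimes>\<^bsub>G Mod H1\<^esub> Z = H1"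
  proof -
    fix Z assume Z: "Z \<in> carrier (G Mod H1)"
    have "Z [^]\<^bsub>G Mod H1\<^esub> (2::nat) = \<one>\<^bsub>G Mod H1\<^esub>"
      using assms(6) Z unfolding has_exponent_def by blast
    moreover have "Z [^]\<^bsub>G Mod H1\<^esub> (2::nat) = Z \<otimes>\<^bsub>G Mod H1\<^esub> Z"
      unfolding numeral_2_eq_2 by (simp only: Q1.nat_pow_Suc Q1.nat_pow_0 Q1.l_one[OF Z])
    ultimately show "Z \<otimes>\<^bsub>G Mod H1\<^esub> Z = H1" by simp
  qed
  have sq: "\<And>y. y \<in> carrier G \<Longrightarrow> y \<otimes> y \<in> H1"
  proof -
    fix y assume y: "y \<in> carrier G"
    have "H1 #> y \<in> carrier (G Mod H1)" using y by (simp add: carrier_FactGroup)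
    then have "(H1 #> y) <#> (H1 #> y) = H1" using exp by simp
    then have "H1 #> (y \<otimes> y) = H1" using y by (simp add: N1.rcos_sum)
    then show "y \<otimes> y \<in> H1" using y G.coset_join1 N1.subgroup_axioms by blast
  qed
  have c1: "\<And>a b. a \<in> carrier G \<Longrightarrow> b \<in> carrier G \<Longrightarrow> (a \<otimes> b) \<otimes> inv (b \<otimes> a) \<in> H1"
  proof -
    fix a b assume a: "a \<in> carrier G" and b: "b \<in> carrier G"
    have A: "H1 #> a \<in> carrier (G Mod H1)" "H1 #> b \<in> carrier (G Mod H1)"
      using a b by (simp_all add: carrier_FactGroup)
    have e: "\<And>Z. Z \<in> carrier (G Mod H1) \<Longrightarrow> Z \<otimes>\<^bsub>G Mod H1\<^esub> Z = \<one>\<^bsub>G Mod H1\<^esub>"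
      using exp by (simp only: one_FactGroup)
    have "(H1 #> a) \<otimes>\<^bsub>G Mod H1\<^esub> (H1 #> b) = (H1 #> b) \<otimes>\<^bsub>G Mod H1\<^esub> (H1 #> a)"
      by (rule Q1.exp2_comm[OF e A])
    then have "H1 #> (a \<otimes> b) = H1 #> (b \<otimes> a)" using a b by (simp add: N1.rcos_sum)
    then show "(a \<otimes> b) \<otimes> inv (b \<otimes> a) \<in> H1" using a b N1.coset_eq_imp by simp
  qed
  obtain \<phi> where phi: "\<phi> \<in> iso (G Mod H2) (integer_mod_group 4)"
    using assms(7) unfolding is_iso_def by blast
  have hom: "\<phi> \<in> hom (G Mod H2) (integer_mod_group 4)" and
    surj: "\<phi> ` carrier (G Mod H2) = carrier (integer_mod_group 4)" and
    inj: "inj_on \<phi> (carrier (G Mod H2))"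
    using phi by (auto simp: iso_iff)
  have c2: "\<And>a b. a \<in> carrier G \<Longrightarrow> b \<in> carrier G \<Longrightarrow> (a \<otimes> b) \<otimes> inv (b \<otimes> a) \<in> H2"
  proof -
    fix a b assume a: "a \<in> carrier G" and b: "b \<in> carrier G"
    have A: "H2 #> a \<in> carrier (G Mod H2)" "H2 #> b \<in> carrier (G Mod H2)"
      using a b by (simp_all add: carrier_FactGroup)
    have "\<phi> ((H2 #> a) \<otimes>\<^bsub>G Mod H2\<^esub> (H2 #> b)) = \<phi> ((H2 #> b) \<otimes>\<^bsub>G Mod H2\<^esub> (H2 #> a))"
      using hom_mult[OF hom A] hom_mult[OF hom A(2) A(1)] by (simp add: add.commute)
    then have "(H2 #> a) \<otimes>\<^bsub>G Mod H2\<^esub> (H2 #> b) = (H2 #> b) \<otimes>\<^bsub>G Mod H2\<^esub> (H2 #> a)"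
      by (rule inj_onD[OF inj _ Q2.m_closed[OF A] Q2.m_closed[OF A(2) A(1)]])
    then have "H2 #> (a \<otimes> b) = H2 #> (b \<otimes> a)" using a b by (simp add: N2.rcos_sum)
    then show "(a \<otimes> b) \<otimes> inv (b \<otimes> a) \<in> H2" using a b N2.coset_eq_imp by simp
  qed
  have "(1::int) \<in> carrier (integer_mod_group 4)" by (simp add: carrier_integer_mod_group)
  then have "(1::int) \<in> \<phi> ` carrier (G Mod H2)" unfolding surj .
  then obtain C where C0: "1 = \<phi> C" "C \<in> carrier (G Mod H2)" by (rule imageE)
  then have C: "C \<in> carrier (G Mod H2)" "\<phi> C = 1" by simp_all
  then obtain x where x: "x \<in> carrier G" "C = H2 #> x" by (auto simp: carrier_FactGroup)
  have "\<phi> (C \<otimes>\<^bsub>G Mod H2\<^esub> C) = 2" using hom_mult[OF hom C(1) C(1)] C by simp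
  moreover have "\<phi> H2 = 0"
    using hom_one[OF hom Q2.group_axioms group_integer_mod_group] by (simp only: one_FactGroup one_integer_mod_group)
  ultimately have ne: "C \<otimes>\<^bsub>G Mod H2\<^esub> C \<noteq> H2" by auto
  have xx: "x \<otimes> x \<notin> H2"
  proof
    assume "x \<otimes> x \<in> H2"
    then have "H2 #> (x \<otimes> x) = H2" by (simp add: N2.rcos_const G.group_axioms)
    then show False using ne x by (simp add: N2.rcos_sum)
  qed
  have xx1: "x \<otimes> x \<noteq> \<one>" using xx N2.one_closed by auto
  have sub: "{\<one>, x \<otimes> x} \<subseteq> H1" using sq[OF x(1)] N1.one_closed by blast
  have c2card: "card {\<one>, x \<otimes> x} = 2" using xx1 by simp
  have cc: "card {\<one>, x \<otimes> x} = card H1" using assms(5) c2card by (simp only:)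
  have H1eq: "H1 = {\<one>, x \<otimes> x}"
    by (rule sym[OF card_subset_eq[OF assms(4) sub cc]])
  show ?thesis
  proof (rule G.group_comm_groupI)
    fix a b assume a: "a \<in> carrier G" and b: "b \<in> carrier G"
    have "(a \<otimes> b) \<otimes> inv (b \<otimes> a) \<in> {\<one>, x \<otimes> x}"
      using c1[OF a b] H1eq by (simp only:)
    then have "(a \<otimes> b) \<otimes> inv (b \<otimes> a) = \<one> \<or> (a \<otimes> b) \<otimes> inv (b \<otimes> a) = x \<otimes> x"
      by (simp only: insert_iff empty_iff simp_thms)
    then have c0: "(a \<otimes> b) \<otimes> inv (b \<otimes> a) = \<one>"
      using c2[OF a b] xx by metis
    have "inv (inv (b \<otimes> a)) = a \<otimes> b"
      by (rule G.inv_equality[OF c0 G.inv_closed[OF G.m_closed[OF b a]] G.m_closed[OF a b]])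
    then show "a \<otimes> b = b \<otimes> a" using a b by simp
  qed
qed

end
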